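(* Let $m=2k+1\ge3$ be odd, and write the Chebyshev polynomial of degree $m$ as $T_m(x)=\sum_{i=0}^{k}c_{2i+1}x^{2i+1}$. Let $s=\max\{v_2(m+1),v_2(m-1)\}$. Then $v_2(c_3)=s$ and $v_2(c_{2i+1})\ge s+1$ for all $1<i\le k$.
   Context: $v_2$ denotes the $2$-adic valuation. For an integer $m\ge0$, the $m$-th Chebyshev polynomial is $$T_m(x)=\sum_{k=0}^{\lfloor m/2\rfloor}(-1)^k\frac{m}{m-k}\binom{m-k}{k}2^{m-2k-1}x^{m-2k}.$$ For odd $m$ it contains only odd powers of $x$. *)

theory Defs
  imports "HOL-Computational_Algebra.Computational_Algebra"
begin

definition chebyshev_T :: "nat \<Rightarrow> rat poly" where
  "chebyshev_T m = (\<Sum>k\<le>m div 2.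
      monom ((-1) ^ k * (of_nat m / of_nat (m - k)) * of_nat ((m - k) choose k)
             * (2::rat) powi (int m - 2 * int k - 1)) (m - 2 * k))"

end

theory Submission imports Defs begin

lemma fact_even_decomp: "\<exists>r::int. odd r \<and> fact (2*q) = 2^q * fact q * r"
proof (induction q)
  case 0 then show ?case by (intro exI[of _ 1]) simp
next
  case (Suc q)
  then obtain r::int where r: "odd r" "fact (2*q) = 2^q * fact q * r" by blast
  have "fact (2*Suc q) = (of_nat (2*q+2) * of_nat (2*q+1)) * (fact (2*q)::int)"
    by (simp add: fact_Suc algebra_simps)
  also have "\<dots> = (of_nat (2*q+2) * of_nat (2*q+1)) * (2^q * fact q * r)"
    by (simp only: r(2))
  also have "\<dots> = 2^Suc q * fact (Suc q) * ((2*int q+1)*r)"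
    by (simp only: fact_Suc of_nat_Suc power_Suc) (simp add: algebra_simps)
  finally show ?case using r(1) by (intro exI[of _ "(2*int q+1)*r"]) simp
qed

lemma v2_fact_le: "n \<ge> 1 \<Longrightarrow> multiplicity (2::int) (fact n) \<le> n - 1"
proof (induction n rule: less_induct)
  case (less n)
  obtain q where q: "n = 2*q \<or> n = 2*q+1" by (metis odd_two_times_div_two_succ even_two_times_div_two)
  obtain r::int where r: "odd r" "fact (2*q) = 2^q * fact q * r" using fact_even_decomp by blast
  have mo: "multiplicity (2::int) r = 0" using r(1) by (intro not_dvd_imp_multiplicity_0) auto
  have nz: "r \<noteq> 0" using r(1) by auto
  have e: "multiplicity (2::int) (fact (2*q)) = q + multiplicity 2 (fact q :: int)"
    unfolding r(2) using nz mo
    by (simp add: prime_elem_multiplicity_mult_distrib prime_elem_multiplicity_power_distrib)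
  have o2: "multiplicity (2::int) (fact (2*q+1)) = multiplicity (2::int) (fact (2*q))"
  proof -
    have "(fact (2*q+1)::int) = (2*int q+1) * fact (2*q)" by (simp add: fact_Suc)
    moreover have "multiplicity (2::int) (2*int q+1) = 0" 
      by (intro not_dvd_imp_multiplicity_0) presburger
    ultimately show ?thesis 
      by (simp add: prime_elem_multiplicity_mult_distrib add.commute del: of_nat_fact)
  qed
  show ?case
  proof (cases "q = 0")
    case True then show ?thesis using q less by auto
  next
    case False
    then have "multiplicity (2::int) (fact q) \<le> q - 1" using less q by auto
    then show ?thesis using q e o2 False by auto
  qed
qed

lemma coeff_T:
  assumes "i \<le> k"
  shows "coeff (chebyshev_T (2*k+1)) (2*i+1) =
    (-1)^(k-i) * (of_nat (2*k+1) / of_nat (k+i+1)) * of_nat ((k+i+1) choose (k-i)) * 2^(2*i)"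
proof -
  define f where "f j = (-1) ^ j * (of_nat (2*k+1) / of_nat (2*k+1 - j)) * of_nat ((2*k+1 - j) choose j)
             * (2::rat) powi (int (2*k+1) - 2 * int j - 1)" for j
  have d: "(2*k+1) div 2 = k" by simp
  have "coeff (chebyshev_T (2*k+1)) (2*i+1) = (\<Sum>j\<le>k. if j = k - i then f j else 0)"
    unfolding chebyshev_T_def coeff_sum coeff_monom d f_def
    by (intro sum.cong refl) (use assms in auto)
  also have "\<dots> = f (k-i)" using assms by simp
  also have "\<dots> = (-1)^(k-i) * (of_nat (2*k+1) / of_nat (k+i+1)) * of_nat ((k+i+1) choose (k-i)) * 2^(2*i)"
  proof -
    have a: "2*k+1 - (k-i) = k+i+1" using assms by simp
    have b: "int (2*k+1) - 2 * int (k-i) - 1 = int (2*i)" using assms by simp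
    show ?thesis unfolding f_def a b power_int_of_nat by simp
  qed
  finally show ?thesis .
qed

lemma key_fact:
  assumes "i \<le> k"
  shows "(((k+i+1) choose (2*i+1)) + ((k+i) choose (2*i+1))) * fact (2*i+1) * fact (k-i)
         = (2*k+1) * (fact (k+i) :: nat)"
    and "((k+i+1) choose (2*i+1)) * fact (2*i+1) * fact (k-i) = (k+i+1) * (fact (k+i) :: nat)"
proof -
  have nk: "k+i+1-(2*i+1) = k-i" by simp
  have A0: "fact (2*i+1) * fact (k-i) * ((k+i+1) choose (2*i+1)) = (fact (k+i+1) :: nat)"
  proof -
    have "2*i+1 \<le> k+i+1" using assms by simp
    from binomial_fact_lemma[OF this] show ?thesis unfolding nk by (simp only: ac_simps)
  qed
  have fk: "fact (k+i+1) = (k+i+1) * (fact (k+i) :: nat)" using fact_Suc[of "k+i"] by simp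
  have A: "((k+i+1) choose (2*i+1)) * fact (2*i+1) * fact (k-i) = (k+i+1) * (fact (k+i) :: nat)"
    unfolding fk[symmetric] A0[symmetric] by (simp only: ac_simps)
  have B: "((k+i) choose (2*i+1)) * fact (2*i+1) * fact (k-i) = (k-i) * (fact (k+i) :: nat)"
  proof (cases "i = k")
    case True then show ?thesis by simp
  next
    case False
    define d where "d = k - i - 1"
    have kd: "k = i + Suc d" using assms False unfolding d_def by simp
    have e1: "k - i = Suc d" "k + i - (2*i+1) = d" using kd by simp_all
    have "fact (2*i+1) * fact (k+i - (2*i+1)) * ((k+i) choose (2*i+1)) = (fact (k+i)::nat)"
      using kd by (intro binomial_fact_lemma) simp
    then have H: "fact (2*i+1) * fact d * ((k+i) choose (2*i+1)) = (fact (k+i)::nat)" by (simp only: e1)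
    have fs: "fact (Suc d) = Suc d * (fact d :: nat)" by simp
    have "((k+i) choose (2*i+1)) * fact (2*i+1) * fact (Suc d) = Suc d * (fact (2*i+1) * fact d * ((k+i) choose (2*i+1)))"
      unfolding fs by (simp only: ac_simps)
    then show ?thesis unfolding e1 H .
  qed
  show "(((k+i+1) choose (2*i+1)) + ((k+i) choose (2*i+1))) * fact (2*i+1) * fact (k-i)
         = (2*k+1) * (fact (k+i) :: nat)"
  proof -
    have "(((k+i+1) choose (2*i+1)) + ((k+i) choose (2*i+1))) * fact (2*i+1) * fact (k-i)
        = ((k+i+1) choose (2*i+1)) * fact (2*i+1) * fact (k-i) + ((k+i) choose (2*i+1)) * fact (2*i+1) * fact (k-i)"
      by (simp only: distrib_right)
    also have "\<dots> = ((k+i+1) + (k-i)) * (fact (k+i) :: nat)" unfolding A B by (simp only: distrib_right)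
    also have "(k+i+1) + (k-i) = 2*k+1" using assms by simp
    finally show ?thesis .
  qed
  show "((k+i+1) choose (2*i+1)) * fact (2*i+1) * fact (k-i) = (k+i+1) * (fact (k+i) :: nat)" by (rule A)
qed

lemma prod_fact:
  assumes "i \<le> k"
  shows "fact (k+i) = fact (k-i) * (\<Prod>j=1..i. (k+j)*(k+1-j) :: nat)"
  using assms
proof (induction i)
  case 0 then show ?case by simp
next
  case (Suc i)
  then have IH: "fact (k+i) = fact (k-i) * (\<Prod>j=1..i. (k+j)*(k+1-j) :: nat)" by simp
  have e: "k - i = Suc (k - Suc i)" using Suc.prems by simp
  have "fact (k + Suc i) = (k+i+1) * (fact (k+i) :: nat)" by simp
  also have "\<dots> = (k+i+1) * (Suc (k - Suc i) * fact (k - Suc i)) * (\<Prod>j=1..i. (k+j)*(k+1-j) :: nat)"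
    by (simp only: IH e fact_Suc) (simp add: algebra_simps)
  also have "\<dots> = fact (k - Suc i) * (\<Prod>j=1..Suc i. (k+j)*(k+1-j) :: nat)"
    using Suc.prems by (simp add: algebra_simps Suc_diff_Suc)
  finally show ?case .
qed

lemma main_i:
  assumes "1 \<le> i" "i \<le> k"
  defines "c \<equiv> (-1)^(k-i) * (4^i * int (((k+i+1) choose (2*i+1)) + ((k+i) choose (2*i+1))))"
  shows "coeff (chebyshev_T (2*k+1)) (2*i+1) = of_int c" "c \<noteq> 0"
    "multiplicity (2::int) c + multiplicity 2 (fact (2*i+1) :: int)
       = (\<Sum>j=1..i. multiplicity (2::int) (4 * (int k + int j) * (int k + 1 - int j)))"
proof -
  define c0 where "c0 = ((k+i+1) choose (2*i+1)) + ((k+i) choose (2*i+1))"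
  define C where "C = (k+i+1) choose (2*i+1)"
  have CC: "(k+i+1) choose (k-i) = C" unfolding C_def
    using binomial_symmetric[of "2*i+1" "k+i+1"] assms by simp
  have k1: "(k+i+1) * c0 = (2*k+1) * C"
  proof -
    define X where "X = fact (2*i+1) * (fact (k-i) :: nat)"
    have "(k+i+1) * c0 * X = (k+i+1) * (c0 * fact (2*i+1) * fact (k-i))" unfolding X_def by (simp only: mult.assoc)
    also have "\<dots> = (k+i+1) * ((2*k+1) * fact (k+i))" using key_fact(1)[OF assms(2)] unfolding c0_def by simp
    also have "\<dots> = (2*k+1) * (C * fact (2*i+1) * fact (k-i))"
    proof -
      have eq: "C * fact (2*i+1) * fact (k-i) = (k+i+1)*fact(k+i)" using key_fact(2)[OF assms(2)] unfolding C_def .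
      show ?thesis by (subst eq) (simp only: ac_simps)
    qed
    also have "\<dots> = (2*k+1) * C * X" unfolding X_def by (simp only: mult.assoc)
    finally have "(k+i+1) * c0 * X = (2*k+1) * C * X" .
    moreover have "X \<noteq> 0" by (simp add: X_def)
    ultimately show ?thesis by simp
  qed
  have q: "(of_nat (2*k+1) / of_nat (k+i+1)) * of_nat C = (of_nat c0 :: rat)"
  proof -
    have "of_nat ((k+i+1) * c0) = (of_nat ((2*k+1) * C) :: rat)" using k1 by simp
    then show ?thesis by (simp add: field_simps)
  qed
  have "coeff (chebyshev_T (2*k+1)) (2*i+1) = (-1)^(k-i) * (of_nat (2*k+1) / of_nat (k+i+1)) * of_nat C * 2^(2*i)"
    using coeff_T[OF assms(2)] CC by simp
  also have "\<dots> = (-1)^(k-i) * ((of_nat (2*k+1) / of_nat (k+i+1)) * of_nat C) * 2^(2*i)"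
    by (simp only: mult.assoc)
  also have "\<dots> = (-1)^(k-i) * of_nat c0 * 4^i" unfolding q by (simp add: power_mult)
  also have "\<dots> = of_int c" unfolding c_def c0_def[symmetric] by simp
  finally show "coeff (chebyshev_T (2*k+1)) (2*i+1) = of_int c" .
  have c0pos: "c0 > 0" unfolding c0_def using assms by simp
  then show cnz: "c \<noteq> 0" unfolding c_def c0_def[symmetric] by simp
  have nat_id: "c0 * 4^i * fact (2*i+1) = (2*k+1) * (\<Prod>j=1..i. 4 * ((k+j)*(k+1-j)) :: nat)"
  proof -
    have "c0 * 4^i * fact (2*i+1) * fact (k-i) = (2*k+1) * (4^i * fact (k+i)::nat)"
    proof -
      have eq: "c0 * fact (2*i+1) * fact (k-i) = (2*k+1) * (fact (k+i) :: nat)"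
        using key_fact(1)[OF assms(2)] unfolding c0_def .
      have "c0 * 4^i * fact (2*i+1) * fact (k-i) = 4^i * (c0 * fact (2*i+1) * fact (k-i))"
        by (simp only: ac_simps)
      then show ?thesis unfolding eq by (simp only: ac_simps)
    qed
    also have "\<dots> = (2*k+1) * (\<Prod>j=1..i. 4 * ((k+j)*(k+1-j)) :: nat) * fact (k-i)"
    proof -
      have p4: "(\<Prod>j=1..i. 4 * ((k+j)*(k+1-j)) :: nat) = 4^i * (\<Prod>j=1..i. (k+j)*(k+1-j))"
        by (simp only: prod.distrib prod_constant card_atLeastAtMost) simp
      show ?thesis unfolding p4 prod_fact[OF assms(2)] by (simp only: ac_simps)
    qed
    finally show ?thesis by simp
  qed
  have int_id: "int c0 * 4^i * fact (2*i+1) = int (2*k+1) * (\<Prod>j=1..i. 4 * (int k + int j) * (int k + 1 - int j))"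
  proof -
    have A: "int c0 * 4^i * fact (2*i+1) = int ((2*k+1) * (\<Prod>j=1..i. 4 * ((k+j)*(k+1-j)) :: nat))"
      unfolding nat_id[symmetric] by (simp only: of_nat_mult of_nat_power of_nat_fact) simp
    have B: "int (\<Prod>j=1..i. 4 * ((k+j)*(k+1-j)) :: nat) = (\<Prod>j=1..i. 4 * (int k + int j) * (int k + 1 - int j))"
      unfolding of_nat_prod
    proof (intro prod.cong refl)
      fix x assume "x \<in> {1..i}"
      then have "int (k+1-x) = int k + 1 - int x" using assms by (simp add: of_nat_diff)
      then show "int (4 * ((k+x)*(k+1-x))) = 4 * (int k + int x) * (int k + 1 - int x)"
        by (simp only: of_nat_mult of_nat_add)
    qed
    show ?thesis unfolding A of_nat_mult[of "2*k+1"] B ..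
  qed
  have p2: "prime_elem (2::int)" by simp
  have Fnz: "0 \<notin> (\<lambda>j. 4 * (int k + int j) * (int k + 1 - int j)) ` {1..i}" using assms by auto
  have mm: "multiplicity (2::int) (int (2*k+1)) = 0"
    by (intro not_dvd_imp_multiplicity_0) simp
  have "multiplicity (2::int) (int c0 * 4^i * fact (2*i+1))
        = (\<Sum>j=1..i. multiplicity (2::int) (4 * (int k + int j) * (int k + 1 - int j)))"
    unfolding int_id using Fnz mm
    by (subst prime_elem_multiplicity_mult_distrib[OF p2]) (auto simp: prime_elem_multiplicity_prod_distrib)
  moreover have "multiplicity (2::int) (int c0 * 4^i * fact (2*i+1)) = multiplicity 2 c + multiplicity 2 (fact (2*i+1) :: int)"
  proof -
    have "multiplicity (2::int) c = multiplicity 2 (4^i * int c0)" unfolding c_def c0_def[symmetric]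
      by (intro multiplicity_times_unit_right) simp
    then show ?thesis using c0pos
      by (simp add: prime_elem_multiplicity_mult_distrib[OF p2] del: of_nat_fact)
  qed
  ultimately show "multiplicity (2::int) c + multiplicity 2 (fact (2*i+1) :: int)
       = (\<Sum>j=1..i. multiplicity (2::int) (4 * (int k + int j) * (int k + 1 - int j)))" by simp
qed

lemma v_fact_odd: "1 \<le> i \<Longrightarrow> multiplicity (2::int) (fact (2*i+1)) \<le> 2*i - 1"
proof -
  assume i: "1 \<le> i"
  have "(fact (2*i+1)::int) = (2*int i+1) * fact (2*i)" by (simp add: fact_Suc)
  moreover have "multiplicity (2::int) (2*int i+1) = 0"
    by (intro not_dvd_imp_multiplicity_0) presburger
  ultimately have "multiplicity (2::int) (fact (2*i+1)) = multiplicity (2::int) (fact (2*i))"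
    by (simp add: prime_elem_multiplicity_mult_distrib add.commute del: of_nat_fact)
  moreover have "multiplicity (2::int) (fact (2*i)) \<le> 2*i - 1" using i by (intro v2_fact_le) simp
  ultimately show ?thesis by simp
qed

lemma vF_ge3:
  assumes "1 \<le> j" "j \<le> k"
  shows "multiplicity (2::int) (4 * (int k + int j) * (int k + 1 - int j)) \<ge> 3"
proof (rule multiplicity_geI)
  have "even (int k + int j) \<or> even (int k + 1 - int j)" by presburger
  then have "even ((int k + int j) * (int k + 1 - int j))" by auto
  then obtain t where "(int k + int j) * (int k + 1 - int j) = 2 * t" by blast
  then have "4 * (int k + int j) * (int k + 1 - int j) = 4 * (2 * t)" by (simp only: mult.assoc)
  then have "4 * (int k + int j) * (int k + 1 - int j) = 2^3 * t" by simp
  then show "(2::int)^3 dvd 4 * (int k + int j) * (int k + 1 - int j)" by simp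
qed (use assms in auto)

lemma main_ex:
  assumes "1 \<le> i" "i \<le> k"
  shows "\<exists>c. coeff (chebyshev_T (2*k+1)) (2*i+1) = of_int c \<and> c \<noteq> 0 \<and>
    multiplicity (2::int) c + multiplicity 2 (fact (2*i+1) :: int)
       = (\<Sum>j=1..i. multiplicity (2::int) (4 * (int k + int j) * (int k + 1 - int j)))"
  using main_i[OF assms] by blast

theorem lemma3p1:
  fixes m k :: nat and s :: nat
  assumes "m = 2 * k + 1" and "m \<ge> 3"
    and "s = max (multiplicity (2::int) (int m + 1)) (multiplicity (2::int) (int m - 1))"
  shows "(\<exists>c::int. coeff (chebyshev_T m) 3 = of_int c \<and> c \<noteq> 0 \<and> multiplicity 2 c = s)
       \<and> (\<forall>i. 1 < i \<and> i \<le> k \<longrightarrow>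
            (\<exists>c::int. coeff (chebyshev_T m) (2 * i + 1) = of_int c \<and> c \<noteq> 0
                      \<and> multiplicity 2 c \<ge> s + 1))"
proof -
  have k1: "k \<ge> 1" using assms by simp
  define F where "F j = multiplicity (2::int) (4 * (int k + int j) * (int k + 1 - int j))" for j
  have p2: "prime_elem (2::int)" by simp
  have vk: "multiplicity (2::int) (int k) = 0 \<or> multiplicity (2::int) (int k + 1) = 0"
  proof (cases "even k")
    case True
    then have "\<not> 2 dvd (int k + 1)" by presburger
    then show ?thesis by (simp add: not_dvd_imp_multiplicity_0)
  next
    case False
    then have "\<not> 2 dvd (int k)" by presburger
    then show ?thesis by (simp add: not_dvd_imp_multiplicity_0)
  qed
  have s_eq: "s = 1 + max (multiplicity (2::int) (int k + 1)) (multiplicity (2::int) (int k))"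
  proof -
    have a: "int m + 1 = 2 * (int k + 1)" "int m - 1 = 2 * int k" using assms by simp_all
    have "multiplicity (2::int) (2 * (int k + 1)) = 1 + multiplicity 2 (int k + 1)"
      by (subst prime_elem_multiplicity_mult_distrib[OF p2]) simp_all
    moreover have "multiplicity (2::int) (2 * int k) = 1 + multiplicity 2 (int k)"
      using k1 by (subst prime_elem_multiplicity_mult_distrib[OF p2]) simp_all
    ultimately show ?thesis using assms(3) unfolding a by simp
  qed
  have m4: "multiplicity (2::int) 4 = 2"
  proof -
    have "(4::int) = 2^2" by simp
    then show ?thesis using multiplicity_prime_power[OF p2, of 2] by simp
  qed
  have F1: "F 1 = s + 1"
  proof -
    have "(4 * (int k + int 1) * (int k + 1 - int 1)) = 2^2 * ((int k + 1) * int k)" by simp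
    then have "F 1 = 2 + (multiplicity (2::int) (int k + 1) + multiplicity 2 (int k))"
      unfolding F_def using k1
      by (simp only:) (simp add: prime_elem_multiplicity_mult_distrib[OF p2] m4)
    then show ?thesis using s_eq vk by auto
  qed
  have part1: "\<exists>c::int. coeff (chebyshev_T m) 3 = of_int c \<and> c \<noteq> 0 \<and> multiplicity 2 c = s"
  proof -
    obtain c where M: "coeff (chebyshev_T (2*k+1)) (2*1+1) = of_int c" "c \<noteq> 0"
      "multiplicity (2::int) c + multiplicity 2 (fact (2*1+1) :: int) = (\<Sum>j=1..1. F j)"
      using main_ex[OF order.refl k1] unfolding F_def by blast
    have f3: "multiplicity (2::int) (fact (2*1+1)) = 1"
    proof -
      have e: "(fact (2*1+1)::int) = 2 * 3" by (simp add: fact_numeral)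
      have "multiplicity (2::int) (2*3) = multiplicity (2::int) 2 + multiplicity (2::int) 3"
        by (rule prime_elem_multiplicity_mult_distrib[OF p2]) simp_all
      moreover have "multiplicity (2::int) 3 = 0" by (rule not_dvd_imp_multiplicity_0) simp
      moreover have "multiplicity (2::int) 2 = 1" using p2 by (rule multiplicity_prime)
      ultimately show ?thesis unfolding e by simp
    qed
    have "multiplicity (2::int) c = s" using M(3) f3 F1 by simp
    moreover have "coeff (chebyshev_T m) 3 = of_int c" using M(1) assms(1) by (simp add: numeral_3_eq_3)
    ultimately show ?thesis using M(2) by blast
  qed
  have part2: "\<exists>c::int. coeff (chebyshev_T m) (2 * i + 1) = of_int c \<and> c \<noteq> 0 \<and> multiplicity 2 c \<ge> s + 1"
    if i: "1 < i" "i \<le> k" for i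
  proof -
    obtain c where M: "coeff (chebyshev_T (2*k+1)) (2*i+1) = of_int c" "c \<noteq> 0"
      "multiplicity (2::int) c + multiplicity 2 (fact (2*i+1) :: int) = (\<Sum>j=1..i. F j)"
      using main_ex[of i k] i unfolding F_def by (meson less_imp_le)
    have sum: "(\<Sum>j=1..i. F j) = F 1 + (\<Sum>j=2..i. F j)"
      using i by (subst sum.atLeast_Suc_atMost) (simp_all add: numeral_2_eq_2)
    have "(\<Sum>j=2..i. F j) \<ge> of_nat (card {2..i}) * 3"
      by (rule sum_bounded_below) (unfold F_def, rule vF_ge3, use i in auto)
    then have s2: "(\<Sum>j=2..i. F j) \<ge> 3 * (i - 1)" by simp
    note M(3)
    moreover have "multiplicity (2::int) (fact (2*i+1)) \<le> 2*i - 1" using i by (intro v_fact_odd) simp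
    ultimately have "multiplicity (2::int) c \<ge> s + 1" using sum s2 F1 i by linarith
    moreover have "coeff (chebyshev_T m) (2*i+1) = of_int c" using M(1) assms(1) by simp
    ultimately show ?thesis using M(2) by blast
  qed
  show ?thesis using part1 part2 by blast
qed
end
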